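(* Let $(X,d)$ be a complete metric space and let $\{T_i\}_{i\in\mathbb{N}}$ be a sequence of continuous maps $T_i:X\to X$ having a compact invariant domain $C\subseteq X$ (i.e. $T_i(x)\in C$ for all $x\in C$ and all $i\in\mathbb{N}$). Suppose $T_i$ converges uniformly on $C$ to a map $T$, where $T$ is a $\phi$-contraction with a comparison function $\phi$. Then for every $x\in C$ the forward trajectory $\Phi_k(x)=T_k\circ T_{k-1}\circ\cdots\circ T_1(x)$ converges to the fixed point $p$ of $T$, i.e. $\lim_{k\to\infty} d(\Phi_k(x),p)=0$.
   Context: A comparison function is a non-decreasing map $\phi:[0,\infty)\to[0,\infty)$ such that $\phi^p(t)\to 0$ as $p\to\infty$ for every $t\ge 0$, where $\phi^p$ denotes the $p$-fold composition of $\phi$. A map $T:X\to X$ is a $\phi$-contraction if $d(T(x),T(y))\le\phi(d(x,y))$ for all $x,y\in X$; such a map on a complete metric space has a unique fixed point. *)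

theory Defs
  imports "HOL-Analysis.Analysis"
begin

definition comparison_function :: "(real \<Rightarrow> real) \<Rightarrow> bool" where
  "comparison_function \<phi> \<longleftrightarrow>
     mono_on {0..} \<phi> \<and> (\<forall>t\<ge>0. \<phi> t \<ge> 0) \<and>
     (\<forall>t\<ge>0. (\<lambda>p. (\<phi> ^^ p) t) \<longlonglongrightarrow> 0)"

definition phi_contraction :: "(real \<Rightarrow> real) \<Rightarrow> ('a::metric_space \<Rightarrow> 'a) \<Rightarrow> bool" where
  "phi_contraction \<phi> T \<longleftrightarrow> (\<forall>x y. dist (T x) (T y) \<le> \<phi> (dist x y))"

fun traj :: "(nat \<Rightarrow> 'a \<Rightarrow> 'a) \<Rightarrow> nat \<Rightarrow> 'a \<Rightarrow> 'a" where
  "traj Ts 0 x = x"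
| "traj Ts (Suc k) x = Ts (Suc k) (traj Ts k x)"

end

theory Submission
  imports Defs
begin

lemma cf_le:
  assumes comp: "comparison_function \<phi>" and t: "t \<ge> 0" and ge: "\<phi> t \<ge> t"
  shows "t = 0 \<and> \<phi> t = 0"
proof -
  have mono: "mono_on {0..} \<phi>" and nn: "\<And>t. t \<ge> 0 \<Longrightarrow> \<phi> t \<ge> 0"
    and lim: "(\<lambda>p. (\<phi> ^^ p) t) \<longlonglongrightarrow> 0"
    using comp t unfolding comparison_function_def by auto
  have "(\<phi> ^^ Suc p) t \<ge> \<phi> t" for p
  proof (induction p)
    case 0 then show ?case by simp
  next
    case (Suc p)
    have "\<phi> t \<le> \<phi> ((\<phi> ^^ Suc p) t)"
      using Suc ge t nn[OF t] by (intro mono_onD[OF mono]) auto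
    then show ?case by simp
  qed
  hence "eventually (\<lambda>p. (\<phi> ^^ p) t \<ge> \<phi> t) sequentially"
    by (metis Suc_le_D eventually_sequentiallyI)
  hence "0 \<ge> \<phi> t" using lim by (intro tendsto_lowerbound[OF lim]) auto
  thus ?thesis using nn[OF t] ge t by auto
qed

lemma cf_le2:
  assumes comp: "comparison_function \<phi>" and t: "t \<ge> 0"
  shows "\<phi> t \<le> t" and "t > 0 \<Longrightarrow> \<phi> t < t"
  using cf_le[OF comp t] by force+

lemma T_lip:
  assumes comp: "comparison_function \<phi>" and contr: "phi_contraction \<phi> T"
  shows "dist (T x) (T y) \<le> dist x y"
  using contr cf_le2(1)[OF comp, of "dist x y"] unfolding phi_contraction_def
  by (meson order_trans zero_le_dist)

lemma T_cont:
  assumes comp: "comparison_function \<phi>" and contr: "phi_contraction \<phi> T"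
  shows "continuous_on UNIV T"
proof -
  have "1-lipschitz_on UNIV T"
    by (rule lipschitz_onI) (use T_lip[OF comp contr] in auto)
  thus ?thesis by (rule lipschitz_on_continuous_on)
qed

lemma fixpt:
  fixes T :: "'a::complete_space \<Rightarrow> 'a"
  assumes comp: "comparison_function \<phi>" and contr: "phi_contraction \<phi> T"
  shows "\<exists>p. T p = p"
proof -
  have mono: "mono_on {0..} \<phi>" and nn: "\<And>t. t \<ge> 0 \<Longrightarrow> \<phi> t \<ge> 0"
    and lim: "\<And>t. t \<ge> 0 \<Longrightarrow> (\<lambda>p. (\<phi> ^^ p) t) \<longlonglongrightarrow> 0"
    using comp unfolding comparison_function_def by auto
  have c: "\<And>x y. dist (T x) (T y) \<le> \<phi> (dist x y)" using contr unfolding phi_contraction_def by auto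
  obtain x0 :: 'a where True by simp
  define x where "x n = (T ^^ n) x0" for n
  have xS: "x (Suc n) = T (x n)" for n unfolding x_def by simp
  define D where "D n = dist (x n) (x (Suc n))" for n
  have nnp: "(\<phi> ^^ n) t \<ge> 0" if "t \<ge> 0" for n t
    by (induction n) (use that nn in auto)
  have Dle: "D n \<le> (\<phi> ^^ n) (D 0)" for n
  proof (induction n)
    case 0 then show ?case by simp
  next
    case (Suc n)
    have "D (Suc n) \<le> \<phi> (D n)" unfolding D_def xS using c by simp
    also have "\<phi> (D n) \<le> \<phi> ((\<phi> ^^ n) (D 0))"
      using Suc nnp[of "D 0" n] by (intro mono_onD[OF mono]) (auto simp: D_def)
    finally show ?case by simp
  qed
  have D0: "D \<longlonglongrightarrow> 0"
  proof (rule Lim_null_comparison[OF _ lim[of "D 0"]])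
    show "\<forall>\<^sub>F n in sequentially. norm (D n) \<le> (\<phi> ^^ n) (D 0)"
      using Dle by (auto simp: D_def)
  qed (simp add: D_def)
  have key: "\<exists>N. \<forall>m\<ge>N. dist (x m) (x N) \<le> e" if e: "e > 0" for e
  proof -
    have "\<phi> e < e" using cf_le2(2)[OF comp] e by auto
    then obtain N where N: "\<forall>n\<ge>N. norm (D n - 0) < e - \<phi> e"
      using LIMSEQ_D[OF D0, of "e - \<phi> e"] by auto
    hence DN: "D N < e - \<phi> e" by (simp add: D_def)
    have "dist (x m) (x N) \<le> e" if "m \<ge> N" for m
      using that
    proof (induction m rule: dec_induct)
      case base then show ?case using e by simp
    next
      case (step m)
      have "dist (x (Suc m)) (x N) \<le> dist (x (Suc m)) (x (Suc N)) + dist (x (Suc N)) (x N)"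
        by (rule dist_triangle)
      also have "\<dots> \<le> \<phi> (dist (x m) (x N)) + D N"
        using c[of "x m" "x N"] unfolding xS D_def by (simp add: dist_commute)
      also have "\<phi> (dist (x m) (x N)) \<le> \<phi> e"
        using step e by (intro mono_onD[OF mono]) auto
      finally show ?case using DN by simp
    qed
    thus ?thesis by blast
  qed
  have "Cauchy x"
  proof (rule metric_CauchyI)
    fix e :: real assume e: "e > 0"
    obtain N where N: "\<forall>m\<ge>N. dist (x m) (x N) \<le> e/3" using key[of "e/3"] e by auto
    show "\<exists>M. \<forall>m\<ge>M. \<forall>n\<ge>M. dist (x m) (x n) < e"
    proof (intro exI allI impI)
      fix m n assume "m \<ge> N" "n \<ge> N"
      hence "dist (x m) (x N) \<le> e/3" "dist (x n) (x N) \<le> e/3" using N by auto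
      moreover have "dist (x m) (x n) \<le> dist (x m) (x N) + dist (x n) (x N)"
        by (metis dist_commute dist_triangle)
      ultimately show "dist (x m) (x n) < e" using e by linarith
    qed
  qed
  then obtain p where p: "x \<longlonglongrightarrow> p" using Cauchy_convergent_iff convergent_def by blast
  have "(\<lambda>n. T (x n)) \<longlonglongrightarrow> T p"
    using T_cont[OF comp contr] p
    by (metis UNIV_I continuous_on_eq_continuous_at isCont_tendsto_compose open_UNIV)
  moreover have "(\<lambda>n. T (x n)) \<longlonglongrightarrow> p"
    unfolding xS[symmetric] using p by (rule LIMSEQ_Suc)
  ultimately have "T p = p" by (rule LIMSEQ_unique)
  thus ?thesis by blast
qed

lemma eta_exists:
  fixes T :: "'a::metric_space \<Rightarrow> 'a"
  assumes comp: "comparison_function \<phi>" and contr: "phi_contraction \<phi> T"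
    and compC: "compact C" and Tp: "T p = p" and d: "\<delta> > 0"
  shows "\<exists>\<eta>>0. \<eta> \<le> \<delta> \<and> (\<forall>y\<in>C. dist y p \<ge> \<delta> \<longrightarrow> dist (T y) p \<le> dist y p - \<eta>)"
proof -
  define K where "K = C \<inter> {y. dist y p \<ge> \<delta>}"
  have "closed {y. dist y p \<ge> \<delta>}"
    by (intro closed_Collect_le continuous_intros)
  hence cK: "compact K" unfolding K_def using compC by (simp add: compact_Int_closed)
  show ?thesis
  proof (cases "K = {}")
    case True
    then show ?thesis using d unfolding K_def by (intro exI[of _ \<delta>]) auto
  next
    case False
    define g where "g y = dist y p - dist (T y) p" for y
    have "continuous_on K g" unfolding g_def
      using T_cont[OF comp contr]
      by (intro continuous_intros) (auto intro: continuous_on_subset)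
    then obtain y0 where y0: "y0 \<in> K" "\<And>y. y \<in> K \<Longrightarrow> g y0 \<le> g y"
      using continuous_attains_inf[OF cK False] by blast
    have "dist (T y0) p \<le> \<phi> (dist y0 p)"
      using contr Tp unfolding phi_contraction_def by metis
    also have "\<dots> < dist y0 p" using cf_le2(2)[OF comp, of "dist y0 p"] y0(1) d by (force simp: K_def)
    finally have g0: "g y0 > 0" by (simp add: g_def)
    have "\<forall>y\<in>C. dist y p \<ge> \<delta> \<longrightarrow> dist (T y) p \<le> dist y p - min (g y0) \<delta>"
    proof (intro ballI impI)
      fix y assume "y \<in> C" "dist y p \<ge> \<delta>"
      hence "g y0 \<le> g y" using y0(2) by (auto simp: K_def)
      thus "dist (T y) p \<le> dist y p - min (g y0) \<delta>" unfolding g_def by linarith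
    qed
    thus ?thesis
      using g0 d by (intro exI[of _ "min (g y0) \<delta>"]) auto
  qed
qed

theorem proposition3p10:
  fixes Ts :: "nat \<Rightarrow> 'a::complete_space \<Rightarrow> 'a"
    and T :: "'a \<Rightarrow> 'a" and C :: "'a set" and \<phi> :: "real \<Rightarrow> real"
  assumes cont: "\<And>i. continuous_on UNIV (Ts i)"
    and compC: "compact C"
    and inv: "\<And>i x. x \<in> C \<Longrightarrow> Ts i x \<in> C"
    and unif: "uniform_limit C Ts T sequentially"
    and comp: "comparison_function \<phi>"
    and contr: "phi_contraction \<phi> T"
  shows "\<exists>p. T p = p \<and> (\<forall>x\<in>C. ((\<lambda>k. dist (traj Ts k x) p) \<longlonglongrightarrow> 0))"
proof -
  obtain p where Tp: "T p = p" using fixpt[OF comp contr] by blast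
  have Tle: "dist (T y) p \<le> dist y p" for y
    using T_lip[OF comp contr, of y p] Tp by simp
  have "(\<lambda>k. dist (traj Ts k x) p) \<longlonglongrightarrow> 0" if x: "x \<in> C" for x
  proof (rule LIMSEQ_I)
    fix e :: real assume e: "e > 0"
    define a where "a k = dist (traj Ts k x) p" for k
    have yC: "traj Ts k x \<in> C" for k by (induction k) (use x inv in auto)
    define \<delta> where "\<delta> = e/2"
    have d: "\<delta> > 0" using e by (simp add: \<delta>_def)
    obtain \<eta> where eta: "\<eta> > 0" "\<eta> \<le> \<delta>"
      "\<And>y. y \<in> C \<Longrightarrow> dist y p \<ge> \<delta> \<Longrightarrow> dist (T y) p \<le> dist y p - \<eta>"
      using eta_exists[OF comp contr compC Tp d] by blast
    have "\<forall>\<^sub>F n in sequentially. \<forall>y\<in>C. dist (Ts n y) (T y) < \<eta>/2"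
      using uniform_limitD[OF unif, of "\<eta>/2"] eta(1) by simp
    then obtain N where N: "\<And>n y. n \<ge> N \<Longrightarrow> y \<in> C \<Longrightarrow> dist (Ts n y) (T y) < \<eta>/2"
      unfolding eventually_sequentially by blast
    have step: "a (Suc k) < dist (T (traj Ts k x)) p + \<eta>/2" if "k \<ge> N" for k
    proof -
      have "a (Suc k) \<le> dist (Ts (Suc k) (traj Ts k x)) (T (traj Ts k x)) + dist (T (traj Ts k x)) p"
        unfolding a_def by (simp add: dist_triangle)
      moreover have "dist (Ts (Suc k) (traj Ts k x)) (T (traj Ts k x)) < \<eta>/2"
        using N[of "Suc k"] that yC by auto
      ultimately show ?thesis by linarith
    qed
    have big: "a (Suc k) < a k - \<eta>/2" if "k \<ge> N" "a k \<ge> \<delta>" for k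
      using step[OF that(1)] eta(3)[OF yC, of k] that(2) unfolding a_def by force
    have small: "a (Suc k) < \<delta> + \<eta>/2" if "k \<ge> N" "a k < \<delta>" for k
      using step[OF that(1)] Tle[of "traj Ts k x"] that(2) unfolding a_def by force
    have "\<exists>k\<ge>N. a k < \<delta>"
    proof (rule ccontr)
      assume H: "\<not> ?thesis"
      have dec: "a (N + j) \<le> a N - real j * (\<eta>/2)" for j
      proof (induction j)
        case 0 then show ?case by simp
      next
        case (Suc j)
        have "a (Suc (N + j)) < a (N + j) - \<eta>/2" using H big[of "N+j"] by (meson le_add1 not_le)
        then show ?case using Suc by (simp add: algebra_simps add_divide_distrib)
      qed
      obtain j :: nat where j: "real j > a N / (\<eta>/2)" using reals_Archimedean2 by blast
      hence "real j * (\<eta>/2) > a N" using eta(1) by (simp add: field_simps)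
      hence "a (N + j) < 0" using dec[of j] by linarith
      thus False unfolding a_def by simp
    qed
    then obtain k0 where k0: "k0 \<ge> N" "a k0 < \<delta>" by blast
    have ak: "a k < \<delta> + \<eta>/2" if "k \<ge> k0" for k
      using that
    proof (induction k rule: dec_induct)
      case base then show ?case using k0 eta by simp
    next
      case (step k)
      show ?case
      proof (cases "a k < \<delta>")
        case True then show ?thesis using small[of k] step k0 by simp
      next
        case False then show ?thesis using big[of k] step k0 by simp
      qed
    qed
    have "\<forall>k\<ge>k0. norm (dist (traj Ts k x) p - 0) < e"
    proof (intro allI impI)
      fix k assume "k \<ge> k0"
      hence "a k < \<delta> + \<eta>/2" using ak by blast
      thus "norm (dist (traj Ts k x) p - 0) < e"
        using eta(2) e unfolding a_def \<delta>_def by simp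
    qed
    thus "\<exists>no. \<forall>n\<ge>no. norm (dist (traj Ts n x) p - 0) < e" by blast
  qed
  thus ?thesis using Tp by blast
qed

end
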